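(* Let $n_1,n_2$ be positive integers with $n_1\ge n_2$. Let $C_1$ be a collection of $2^{3n_1}$ squares of the form $[i4^{-n_1},(i+1)4^{-n_1}]\times[j4^{-n_1},(j+1)4^{-n_1}]$ ($0\le i,j<4^{n_1}$) such that each column $[j4^{-n_1},(j+1)4^{-n_1}]\times[0,1]$, $j=0,\dots,4^{n_1}-1$, contains exactly $2^{n_1}$ squares of $C_1$. Then one can choose, inside each square of $C_1$, exactly $2^{n_2}$ of its $4^{2n_2}$ grid subsquares of side length $4^{-(n_1+n_2)}$, in such a way that every column $[j4^{-(n_1+n_2)},(j+1)4^{-(n_1+n_2)}]\times[0,1]$, $j=0,\dots,4^{n_1+n_2}-1$, contains at least one chosen subsquare. *)

theory Defs
  imports Main
begin

text \<open>Grid squares of level n are encoded by index pairs (a,b), standing for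
  [a 4^-n,(a+1)4^-n] x [b 4^-n,(b+1)4^-n]; a is the x-index, which determines the column.\<close>

definition subsquares :: "nat \<Rightarrow> nat \<times> nat \<Rightarrow> (nat \<times> nat) set" where
  "subsquares m sq = {(x, y). x div 4 ^ m = fst sq \<and> y div 4 ^ m = snd sq}"

end

theory Submission
  imports Defs
begin

lemma sub_mem:
  assumes "(P::nat) * P = 4 ^ m" and "k < P" and "t < P"
  shows "(a * 4 ^ m + (k * P + t), b * 4 ^ m) \<in> subsquares m (a, b)"
proof -
  have "k * P + t < P * P"
  proof -
    have "k * P + t < k * P + P" using assms by simp
    also have "\<dots> = (k + 1) * P" by simp
    also have "\<dots> \<le> P * P" using assms(2) by (intro mult_right_mono) auto
    finally show ?thesis .
  qed
  hence o: "k * P + t < 4 ^ m" using assms(1) by simp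
  have "(a * 4 ^ m + (k * P + t)) div 4 ^ m = a" using o by simp
  moreover have "(b * 4 ^ m) div 4 ^ m = b" by simp
  ultimately show ?thesis unfolding subsquares_def by simp
qed

lemma sub_disj:
  assumes "p \<in> subsquares m s1" "p \<in> subsquares m s2" shows "s1 = s2"
  using assms unfolding subsquares_def by (auto simp: prod_eq_iff)

theorem lemma3p1:
  fixes n1 n2 :: nat and C1 :: "(nat \<times> nat) set"
  assumes "n1 \<ge> 1" and "n2 \<ge> 1" and "n1 \<ge> n2"
    and "C1 \<subseteq> {..<4 ^ n1} \<times> {..<4 ^ n1}"
    and "card C1 = 2 ^ (3 * n1)"
    and "\<forall>a < 4 ^ n1. card {b. (a, b) \<in> C1} = 2 ^ n1"
  shows "\<exists>S :: (nat \<times> nat) set.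
           S \<subseteq> (\<Union>sq\<in>C1. subsquares n2 sq)
         \<and> (\<forall>sq\<in>C1. card (S \<inter> subsquares n2 sq) = 2 ^ n2)
         \<and> (\<forall>c < 4 ^ (n1 + n2). \<exists>y. (c, y) \<in> S)"
proof -
  define P :: nat where "P = 2 ^ n2"
  define M :: nat where "M = 4 ^ n2"
  have PP: "P * P = M" unfolding P_def M_def by (simp add: power_mult_distrib[symmetric])
  have Ppos: "P > 0" unfolding P_def by simp
  have Ple: "P \<le> 2 ^ n1" unfolding P_def using assms(3) by (simp add: power_increasing)
  have "\<forall>a. \<exists>h. a < 4 ^ n1 \<longrightarrow> bij_betw h {0..<(2::nat) ^ n1} {b. (a, b) \<in> C1}"
  proof
    fix a
    show "\<exists>h. a < 4 ^ n1 \<longrightarrow> bij_betw h {0..<(2::nat) ^ n1} {b. (a, b) \<in> C1}"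
    proof (cases "a < 4 ^ n1")
      case True
      hence c: "card {b. (a, b) \<in> C1} = 2 ^ n1" using assms(6) by simp
      hence "finite {b. (a, b) \<in> C1}" by (intro card_ge_0_finite) simp
      from ex_bij_betw_nat_finite[OF this] c show ?thesis by auto
    qed simp
  qed
  then obtain g where g: "\<And>a. a < 4 ^ n1 \<Longrightarrow> bij_betw (g a) {0..<(2::nat) ^ n1} {b. (a, b) \<in> C1}"
    by metis
  define r where "r a b = inv_into {0..<(2::nat) ^ n1} (g a) b" for a b
  define T where "T sq = (\<lambda>t. (fst sq * M + ((r (fst sq) (snd sq) mod P) * P + t), snd sq * M)) ` {..<P}" for sq
  define S where "S = (\<Union>sq\<in>C1. T sq)"
  have Tsub: "T sq \<subseteq> subsquares n2 sq" for sq
  proof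
    fix p assume "p \<in> T sq"
    then obtain t where t: "t < P" and p: "p = (fst sq * M + ((r (fst sq) (snd sq) mod P) * P + t), snd sq * M)"
      unfolding T_def by auto
    have "p \<in> subsquares n2 (fst sq, snd sq)"
      unfolding p M_def by (rule sub_mem) (use PP t Ppos in \<open>auto simp: M_def\<close>)
    thus "p \<in> subsquares n2 sq" by simp
  qed
  have part1: "S \<subseteq> (\<Union>sq\<in>C1. subsquares n2 sq)" unfolding S_def using Tsub by blast
  have part2: "card (S \<inter> subsquares n2 sq) = 2 ^ n2" if sq: "sq \<in> C1" for sq
  proof -
    have "S \<inter> subsquares n2 sq = T sq"
    proof
      show "S \<inter> subsquares n2 sq \<subseteq> T sq"
      proof
        fix p assume "p \<in> S \<inter> subsquares n2 sq"
        then obtain s2 where "s2 \<in> C1" "p \<in> T s2" "p \<in> subsquares n2 sq" unfolding S_def by auto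
        moreover have "s2 = sq" using calculation Tsub sub_disj by blast
        ultimately show "p \<in> T sq" by simp
      qed
      show "T sq \<subseteq> S \<inter> subsquares n2 sq" using Tsub sq unfolding S_def by blast
    qed
    moreover have "card (T sq) = P" unfolding T_def
      by (subst card_image) (auto simp: inj_on_def)
    ultimately show ?thesis by (simp add: P_def)
  qed
  have part3: "\<exists>y. (c, y) \<in> S" if c: "c < 4 ^ (n1 + n2)" for c
  proof -
    define a where "a = c div M"
    define q where "q = (c mod M) div P"
    define t where "t = (c mod M) mod P"
    have Mpos: "M > 0" unfolding M_def by simp
    have a: "a < 4 ^ n1" using c unfolding a_def M_def
      by (simp add: power_add less_mult_imp_div_less)
    have "c mod M < P * P" using PP Mpos by simp
    hence q: "q < P" unfolding q_def using Ppos by (simp add: less_mult_imp_div_less)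
    have t: "t < P" unfolding t_def using Ppos by simp
    have qn: "q < 2 ^ n1" using q Ple by simp
    define b where "b = g a q"
    have bij: "bij_betw (g a) {0..<(2::nat) ^ n1} {b. (a, b) \<in> C1}" using g a by simp
    have bC: "(a, b) \<in> C1" using bij qn unfolding b_def bij_betw_def by auto
    have rb: "r a b = q" unfolding r_def b_def
      using bij qn by (simp add: bij_betw_def inv_into_f_f)
    have ceq: "c = a * M + ((r a b mod P) * P + t)"
      unfolding rb using q
      by (simp add: a_def q_def t_def)
    have "(c, b * M) \<in> T (a, b)" unfolding T_def using t ceq by auto
    thus ?thesis using bC unfolding S_def by blast
  qed
  show ?thesis using part1 part2 part3 by blast
qed

end
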